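(* Let $p,n\in\mathbb N$ with $p\ge n\ge 5$ and $n-1\nmid p$. Then $$\frac{(n-2)p}{2}-\frac{(n-1)^2}{8}\le ex(p;T_n^1)\le \frac{(n-2)(p-1)}{2}.$$
   Context: All graphs are finite and simple; a graph "contains" $H$ if it has a subgraph isomorphic to $H$. For a graph $L$ and $p\in\mathbb N$, $ex(p;L)$ is the maximum number of edges in a graph on $p$ vertices containing no copy of $L$. For $n\ge 5$, $T_n^1$ is the tree with vertex set $\{v_0,\ldots,v_{n-1}\}$ and edge set $\{v_0v_1,\ldots,v_0v_{n-3},\,v_{n-4}v_{n-2},\,v_{n-3}v_{n-1}\}$. *)

theory Defs
  imports Complex_Main
begin

definition simple_graph_on :: "'a set \<Rightarrow> 'a set set \<Rightarrow> bool" where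
  "simple_graph_on V E \<longleftrightarrow> finite V \<and> (\<forall>e\<in>E. e \<subseteq> V \<and> card e = 2)"

text \<open>A pattern graph L is given on vertex set {0..<k} by its edge set LE.\<close>
definition contains_graph :: "'a set \<Rightarrow> 'a set set \<Rightarrow> nat \<Rightarrow> nat set set \<Rightarrow> bool" where
  "contains_graph V E k LE \<longleftrightarrow>
     (\<exists>f. inj_on f {0..<k} \<and> f ` {0..<k} \<subseteq> V \<and> (\<forall>e\<in>LE. f ` e \<in> E))"

text \<open>ex(p;L): maximum number of edges of an L-free graph on p vertices
  (vertex set {0..<p}, w.l.o.g. up to isomorphism).\<close>
definition ex_num :: "nat \<Rightarrow> nat \<Rightarrow> nat set set \<Rightarrow> nat" where
  "ex_num p k LE = Max {card E | E. simple_graph_on {0..<p} E \<and> \<not> contains_graph {0..<p} E k LE}"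

text \<open>The tree T_n^1 on vertices v_0..v_{n-1} (vertex v_i is i).\<close>
definition T1_edges :: "nat \<Rightarrow> nat set set" where
  "T1_edges n = {{0, i} | i. 1 \<le> i \<and> i \<le> n - 3} \<union> {{n - 4, n - 2}, {n - 3, n - 1}}"

end

theory Submission
  imports Defs
begin


definition nb :: "'a set set \<Rightarrow> 'a \<Rightarrow> 'a set" where
  "nb E x = {y. {x,y} \<in> E}"

lemma sg_edge:
  assumes "simple_graph_on V E" "{x,y} \<in> E"
  shows "x \<in> V" "y \<in> V" "x \<noteq> y"
  using assms unfolding simple_graph_on_def by auto

lemma nb_props:
  assumes "simple_graph_on V E" "y \<in> nb E x"
  shows "x \<in> V" "y \<in> V" "x \<noteq> y" "x \<in> nb E y"
  using sg_edge[OF assms(1)] assms(2) unfolding nb_def by (auto simp: insert_commute)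

lemma nb_sub: "simple_graph_on V E \<Longrightarrow> nb E x \<subseteq> V"
  using nb_props(2) by (metis subsetI)

lemma nb_fin: "simple_graph_on V E \<Longrightarrow> finite (nb E x)"
  using nb_sub[of V E x] unfolding simple_graph_on_def by (auto intro: finite_subset)

lemma nb_sym: "simple_graph_on V E \<Longrightarrow> (x \<in> nb E y) = (y \<in> nb E x)"
  using nb_props by metis

lemma nb_irr: "simple_graph_on V E \<Longrightarrow> x \<notin> nb E x"
  using nb_props by metis

lemma E_fin: "simple_graph_on V E \<Longrightarrow> finite E"
  unfolding simple_graph_on_def by (meson Pow_iff finite_Pow_iff finite_subset subsetI)

lemma edge_form: "simple_graph_on V E \<Longrightarrow> e \<in> E \<Longrightarrow> \<exists>x y. e = {x,y} \<and> x \<noteq> y"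
  unfolding simple_graph_on_def by (metis card_2_iff)

lemma deg_eq:
  assumes G: "simple_graph_on V E"
  shows "card {e\<in>E. x \<in> e} = card (nb E x)"
proof -
  have "bij_betw (\<lambda>y. {x,y}) (nb E x) {e\<in>E. x \<in> e}"
  proof (rule bij_betw_imageI)
    show "inj_on (\<lambda>y. {x,y}) (nb E x)" by (auto simp: inj_on_def doubleton_eq_iff)
    show "(\<lambda>y. {x,y}) ` nb E x = {e\<in>E. x \<in> e}"
    proof
      show "(\<lambda>y. {x,y}) ` nb E x \<subseteq> {e\<in>E. x \<in> e}" by (auto simp: nb_def)
      show "{e\<in>E. x \<in> e} \<subseteq> (\<lambda>y. {x,y}) ` nb E x"
      proof
        fix e assume e: "e \<in> {e\<in>E. x \<in> e}"
        then obtain a b where ab: "e = {a,b}" "a \<noteq> b" using edge_form[OF G] by blast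
        show "e \<in> (\<lambda>y. {x,y}) ` nb E x"
        proof (cases "a = x")
          case True then show ?thesis using e ab by (auto simp: nb_def)
        next
          case False then have "b = x" using e ab by auto
          then show ?thesis using e ab by (auto simp: nb_def insert_commute image_iff)
        qed
      qed
    qed
  qed
  then show ?thesis by (simp add: bij_betw_same_card)
qed

lemma handshake_gen:
  assumes "finite A" "finite F" "\<forall>e\<in>F. e \<subseteq> A \<and> card e = 2"
  shows "(\<Sum>x\<in>A. card {e\<in>F. x \<in> e}) = 2 * card F"
proof -
  have "(\<Sum>x\<in>A. card {e\<in>F. x \<in> e}) = (\<Sum>x\<in>A. \<Sum>e\<in>F. if x \<in> e then 1 else 0)"
    using assms by (intro sum.cong refl) (simp add: sum.inter_filter[symmetric])
  also have "\<dots> = (\<Sum>e\<in>F. \<Sum>x\<in>A. if x \<in> e then 1 else 0)" by (rule sum.swap)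
  also have "\<dots> = (\<Sum>e\<in>F. card {x\<in>A. x \<in> e})" using assms by (intro sum.cong refl) (simp add: sum.inter_filter[symmetric])
  also have "\<dots> = (\<Sum>e\<in>F. card (A \<inter> e))" by (intro sum.cong refl) (metis Collect_conj_eq Collect_mem_eq Int_def)
  also have "\<dots> = (\<Sum>e\<in>F. 2)" using assms by (intro sum.cong) (auto simp: Int_absorb1)
  finally show ?thesis by simp
qed

lemma handshake:
  assumes G: "simple_graph_on V E"
  shows "(\<Sum>x\<in>V. card (nb E x)) = 2 * card E"
proof -
  have "(\<Sum>x\<in>V. card (nb E x)) = (\<Sum>x\<in>V. card {e\<in>E. x \<in> e})"
    using deg_eq[OF G] by simp
  also have "\<dots> = 2 * card E"
    using G E_fin[OF G] by (intro handshake_gen) (auto simp: simple_graph_on_def)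
  finally show ?thesis .
qed



lemma mkT:
  assumes n: "5 \<le> n" and G: "simple_graph_on V E"
    and e1: "{c,a} \<in> E" and e2: "{c,b} \<in> E" and e3: "{a,a'} \<in> E" and e4: "{b,b'} \<in> E"
    and d: "distinct [c,a,b,a',b']"
    and L: "L \<subseteq> nb E c - {a,b,a',b'}" and cL: "n - 5 \<le> card L"
  shows "contains_graph V E n (T1_edges n)"
proof -
  obtain L' where L': "L' \<subseteq> L" "card L' = n-5" "finite L'"
    using obtain_subset_with_card_n[OF cL] by metis
  obtain h where h: "bij_betw h {0..<n-5} L'" using ex_bij_betw_nat_finite[OF L'(3)] L'(2) by metis
  have hL: "\<And>i. i < n-5 \<Longrightarrow> h i \<in> L'" using h by (auto simp: bij_betw_def)
  have hinj: "\<And>i j. i < n-5 \<Longrightarrow> j < n-5 \<Longrightarrow> h i = h j \<Longrightarrow> i = j"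
    using h by (auto simp: bij_betw_def inj_on_def)
  have cnb: "c \<notin> nb E c" using nb_irr[OF G] .
  have Lc: "\<And>x. x \<in> L' \<Longrightarrow> x \<in> nb E c \<and> x \<noteq> a \<and> x \<noteq> b \<and> x \<noteq> a' \<and> x \<noteq> b' \<and> x \<noteq> c"
    using L L'(1) cnb by blast
  define f where "f i = (if i = 0 then c else if i \<le> n-5 then h (i-1) else if i = n-4 then a
      else if i = n-3 then b else if i = n-2 then a' else b')" for i
  have fv: "(i = 0 \<and> f i = c) \<or> (1 \<le> i \<and> i \<le> n-5 \<and> f i = h (i-1)) \<or> (i = n-4 \<and> f i = a)
     \<or> (i = n-3 \<and> f i = b) \<or> (i = n-2 \<and> f i = a') \<or> (i = n-1 \<and> f i = b')" if "i < n" for i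
    using that n unfolding f_def by auto
  have inj: "inj_on f {0..<n}"
  proof (rule inj_onI)
    fix i j assume i: "i \<in> {0..<n}" and j: "j \<in> {0..<n}" and fij: "f i = f j"
    have hi: "1 \<le> i \<Longrightarrow> i \<le> n-5 \<Longrightarrow> h (i-1) \<in> L'" using hL by auto
    have hj: "1 \<le> j \<Longrightarrow> j \<le> n-5 \<Longrightarrow> h (j-1) \<in> L'" using hL by auto
    have hij: "i = j" if "1 \<le> i" "i \<le> n-5" "1 \<le> j" "j \<le> n-5" "h (i-1) = h (j-1)"
    proof -
      have "i - 1 < n-5" "j - 1 < n-5" using that n by linarith+
      then have "i-1 = j-1" using hinj that(5) by blast
      then show "i = j" using that by linarith
    qed
    have hn: "h (k-1) \<noteq> c \<and> h (k-1) \<noteq> a \<and> h (k-1) \<noteq> b \<and> h (k-1) \<noteq> a' \<and> h (k-1) \<noteq> b'"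
      if "1 \<le> k" "k \<le> n-5" for k
      using Lc[OF hL[of "k-1"]] that by auto
    have ii: "i < n" and jj: "j < n" using i j by auto
    show "i = j"
      using fv[OF ii] fv[OF jj]
    proof (elim disjE conjE)
    qed (use fij d hn[of i] hn[of j] hij n in \<open>simp_all\<close>)
  qed
  have VV: "c \<in> V" "a \<in> V" "b \<in> V" "a' \<in> V" "b' \<in> V"
    using sg_edge[OF G e1] sg_edge[OF G e2] sg_edge[OF G e3] sg_edge[OF G e4] by auto
  have img: "f ` {0..<n} \<subseteq> V"
  proof
    fix y assume "y \<in> f ` {0..<n}"
    then obtain i where i: "i < n" "y = f i" by auto
    have "h (i-1) \<in> V" if "1 \<le> i" "i \<le> n-5"
      using hL[of "i-1"] that Lc nb_props(2)[OF G] by force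
    then show "y \<in> V" using fv[OF i(1)] i VV by auto
  qed
  have edges: "\<forall>e\<in>T1_edges n. f ` e \<in> E"
  proof
    fix e assume "e \<in> T1_edges n"
    then consider (s) i where "e = {0,i}" "1 \<le> i" "i \<le> n-3" | (l1) "e = {n-4,n-2}" | (l2) "e = {n-3,n-1}"
      unfolding T1_edges_def by auto
    then show "f ` e \<in> E"
    proof cases
      case s
      have f0: "f 0 = c" unfolding f_def by simp
      consider "i \<le> n-5" | "i = n-4" | "i = n-3" using s n by linarith
      then show ?thesis
      proof cases
        case 1
        then have "f i = h (i-1)" using s unfolding f_def by auto
        moreover have "h (i-1) \<in> nb E c" using hL[of "i-1"] 1 s Lc n by auto
        ultimately show ?thesis using s f0 by (simp add: nb_def)
      next
        case 2 then have "f i = a" using s n unfolding f_def by auto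
        then show ?thesis using s f0 e1 by simp
      next
        case 3 then have "f i = b" using s n unfolding f_def by auto
        then show ?thesis using s f0 e2 by simp
      qed
    next
      case l1
      have "f (n-4) = a" "f (n-2) = a'" using n unfolding f_def by auto
      then show ?thesis using l1 e3 by simp
    next
      case l2
      have "f (n-3) = b" "f (n-1) = b'" using n unfolding f_def by auto
      then show ?thesis using l2 e4 by simp
    qed
  qed
  show ?thesis unfolding contains_graph_def using inj img edges by blast
qed



lemma restrict_sg: "simple_graph_on V E \<Longrightarrow> W \<subseteq> V \<Longrightarrow> simple_graph_on W {e\<in>E. e \<subseteq> W}"
  unfolding simple_graph_on_def using finite_subset by auto

lemma restrict_free:
  assumes "\<not> contains_graph V E n L" "W \<subseteq> V"
  shows "\<not> contains_graph W {e\<in>E. e \<subseteq> W} n L"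
proof
  assume "contains_graph W {e\<in>E. e \<subseteq> W} n L"
  then obtain f where "inj_on f {0..<n}" "f ` {0..<n} \<subseteq> W" "\<forall>e\<in>L. f ` e \<in> {e\<in>E. e \<subseteq> W}"
    unfolding contains_graph_def by blast
  then have "contains_graph V E n L" unfolding contains_graph_def using assms(2) by (intro exI[of _ f]) auto
  then show False using assms(1) by simp
qed

lemma card_split:
  assumes G: "simple_graph_on V E" and S: "S \<subseteq> V"
  shows "card E = card {e\<in>E. e \<subseteq> V - S} + card {e\<in>E. e \<inter> S \<noteq> {}}"
proof -
  have fin: "finite E" using E_fin[OF G] .
  have "E = {e\<in>E. e \<subseteq> V - S} \<union> {e\<in>E. e \<inter> S \<noteq> {}}"
    using G unfolding simple_graph_on_def by blast
  moreover have "{e\<in>E. e \<subseteq> V - S} \<inter> {e\<in>E. e \<inter> S \<noteq> {}} = {}" by blast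
  ultimately show ?thesis using fin
    by (metis (no_types, lifting) card_Un_disjoint finite_Un)
qed

lemma piece:
  assumes G: "simple_graph_on V E" and S: "S \<subseteq> V"
    and IH: "2 * card {e\<in>E. e \<subseteq> V - S} \<le> K * card (V - S)"
    and pc: "2 * card {e\<in>E. e \<inter> S \<noteq> {}} + K \<le> K * card S"
  shows "2 * card E + K \<le> K * card V"
proof -
  have fV: "finite V" using G unfolding simple_graph_on_def by simp
  have cV: "card V = card (V - S) + card S"
    using fV S by (metis card_Diff_subset card_mono diff_add_inverse2 finite_subset le_add_diff_inverse2 add.commute)
  have "2 * card E + K = 2 * card {e\<in>E. e \<subseteq> V - S} + (2 * card {e\<in>E. e \<inter> S \<noteq> {}} + K)"
    using card_split[OF G S] by simp
  also have "\<dots> \<le> K * card (V - S) + K * card S" using IH pc by linarith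
  also have "\<dots> = K * card V" using cV by (simp add: add_mult_distrib2)
  finally show ?thesis .
qed

lemma inter_bound:
  assumes G: "simple_graph_on V E" and F: "F \<subseteq> E"
    and I: "\<And>e1 e2. e1 \<in> F \<Longrightarrow> e2 \<in> F \<Longrightarrow> e1 \<inter> e2 \<noteq> {}"
    and D: "\<And>x. card {e\<in>E. x \<in> e} \<le> D" and D3: "3 \<le> D"
  shows "card F \<le> D"
proof (cases "F = {}")
  case True then show ?thesis by simp
next
  case False
  have fE: "finite E" using E_fin[OF G] .
  obtain e0 where e0: "e0 \<in> F" using False by auto
  then obtain x y where xy: "e0 = {x,y}" "x \<noteq> y" using edge_form[OF G] F by blast
  show ?thesis
  proof (cases "F \<subseteq> {e\<in>E. x \<in> e}")
    case True
    have "card F \<le> card {e\<in>E. x \<in> e}" using True fE by (intro card_mono) auto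
    then show ?thesis using D[of x] by linarith
  next
    case nx: False
    show ?thesis
    proof (cases "F \<subseteq> {e\<in>E. y \<in> e}")
      case True
      have "card F \<le> card {e\<in>E. y \<in> e}" using True fE by (intro card_mono) auto
      then show ?thesis using D[of y] by linarith
    next
      case ny: False
      obtain e1 where e1: "e1 \<in> F" "x \<notin> e1" using nx F by auto
      obtain e2 where e2: "e2 \<in> F" "y \<notin> e2" using ny F by auto
      have "e0 \<inter> e1 \<noteq> {}" using I[OF e0 e1(1)] .
      then have "y \<in> e1" using xy e1(2) by auto
      moreover obtain p q where "e1 = {p,q}" "p \<noteq> q" using edge_form[OF G, of e1] e1 F by auto
      ultimately obtain z where z: "e1 = {y,z}" "z \<noteq> y" by auto
      have zx: "z \<noteq> x" using z e1 by auto
      have "e0 \<inter> e2 \<noteq> {}" using I[OF e0 e2(1)] .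
      then have "x \<in> e2" using xy e2(2) by auto
      moreover obtain p' q' where "e2 = {p',q'}" "p' \<noteq> q'" using edge_form[OF G, of e2] e2 F by auto
      ultimately obtain w where w: "e2 = {x,w}" "w \<noteq> x" by auto
      have wy: "w \<noteq> y" using w e2 by auto
      have "e1 \<inter> e2 \<noteq> {}" using I[OF e1(1) e2(1)] .
      then have zw: "z = w" using z w zx wy xy by auto
      have sub: "F \<subseteq> {{x,y},{y,z},{x,z}}"
      proof
        fix f assume f: "f \<in> F"
        then obtain p q where pq: "f = {p,q}" "p \<noteq> q" using edge_form[OF G] F by blast
        have i0: "f \<inter> {x,y} \<noteq> {}" using I[OF f e0] xy by simp
        have i1: "f \<inter> {y,z} \<noteq> {}" using I[OF f e1(1)] z by simp
        have i2: "f \<inter> {x,z} \<noteq> {}" using I[OF f e2(1)] w zw by simp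
        have pin: "p \<in> {x,y,z}"
        proof (rule ccontr)
          assume "p \<notin> {x,y,z}"
          then have "q \<in> {x,y}" "q \<in> {y,z}" "q \<in> {x,z}" using i0 i1 i2 pq(1) by auto
          then show False using xy(2) z(2) zx by auto
        qed
        have qin: "q \<in> {x,y,z}"
        proof (rule ccontr)
          assume "q \<notin> {x,y,z}"
          then have "p \<in> {x,y}" "p \<in> {y,z}" "p \<in> {x,z}" using i0 i1 i2 pq(1) by auto
          then show False using xy(2) z(2) zx by auto
        qed
        have "{y,x} = {x,y}" "{z,y} = {y,z}" "{z,x} = {x,z}" by auto
        then show "f \<in> {{x,y},{y,z},{x,z}}"
          using pin qin pq by auto
      qed
      have "card {{x,y},{y,z},{x,z}} \<le> 3" by (auto simp: card_insert_if)
      then have "card F \<le> 3" using card_mono[OF _ sub] by (meson finite.emptyI finite.insertI le_trans)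
      then show ?thesis using D3 by simp
    qed
  qed
qed



lemma card_diff_le: "finite B \<Longrightarrow> card A - card B \<le> card (A - B)"
  by (simp add: diff_card_le_card_Diff)

lemma card4: "card {a,b,c,d::'a} \<le> 4" by (auto simp: card_insert_if)
lemma card3: "card {a,b,c::'a} \<le> 3" by (auto simp: card_insert_if)
lemma card2: "card {a,b::'a} \<le> 2" by (auto simp: card_insert_if)

lemma nbE: "y \<in> nb E x \<Longrightarrow> {x,y} \<in> E" unfolding nb_def by simp

lemma Ev_inter:
  assumes n: "5 \<le> n" and G: "simple_graph_on V E" and free: "\<not> contains_graph V E n (T1_edges n)"
    and d: "n - 1 \<le> card (nb E v)"
    and e1: "e1 \<in> E" "v \<notin> e1" "e1 \<inter> nb E v \<noteq> {}"
    and e2: "e2 \<in> E" "v \<notin> e2" "e2 \<inter> nb E v \<noteq> {}"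
  shows "e1 \<inter> e2 \<noteq> {}"
proof
  assume dj: "e1 \<inter> e2 = {}"
  obtain a where a: "a \<in> e1" "a \<in> nb E v" using e1 by auto
  obtain p q where pq: "e1 = {p,q}" "p \<noteq> q" using edge_form[OF G e1(1)] by auto
  obtain a' where a': "e1 = {a,a'}" "a' \<noteq> a" using pq a by auto
  obtain b where b: "b \<in> e2" "b \<in> nb E v" using e2 by auto
  obtain p2 q2 where pq2: "e2 = {p2,q2}" "p2 \<noteq> q2" using edge_form[OF G e2(1)] by auto
  obtain b' where b': "e2 = {b,b'}" "b' \<noteq> b" using pq2 b by auto
  have ed: "{v,a} \<in> E" "{v,b} \<in> E" "{a,a'} \<in> E" "{b,b'} \<in> E"
    using nbE[OF a(2)] nbE[OF b(2)] a' b' e1 e2 by auto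
  have dist: "distinct [v,a,b,a',b']" using dj a' b' e1(2) e2(2) by auto
  have "card (nb E v) - card {a,b,a',b'} \<le> card (nb E v - {a,b,a',b'})" by (rule card_diff_le) simp
  then have "n - 5 \<le> card (nb E v - {a,b,a',b'})" using card4[of a b a' b'] d by linarith
  then have "contains_graph V E n (T1_edges n)"
    using mkT[OF n G ed dist order_refl] by blast
  then show False using free by simp
qed

lemma claimA:
  assumes n: "5 \<le> n" and G: "simple_graph_on V E" and free: "\<not> contains_graph V E n (T1_edges n)"
    and d: "card (nb E v) = n - 2"
    and a: "a \<in> nb E v" and a': "a' \<in> nb E a" "a' \<notin> nb E v" "a' \<noteq> v"
    and b: "b \<in> nb E v" "b \<noteq> a"
  shows "nb E b \<subseteq> {v,a,a'}"
proof
  fix b' assume b': "b' \<in> nb E b"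
  show "b' \<in> {v,a,a'}"
  proof (rule ccontr)
    assume nb': "b' \<notin> {v,a,a'}"
    have ed: "{v,a} \<in> E" "{v,b} \<in> E" "{a,a'} \<in> E" "{b,b'} \<in> E"
      using nbE[OF a] nbE[OF b(1)] nbE[OF a'(1)] nbE[OF b'] by auto
    have dist: "distinct [v,a,b,a',b']"
      using nb' a b a' b' nb_irr[OF G, of v] nb_irr[OF G, of a] nb_irr[OF G, of b] by auto
    have eq: "nb E v - {a,b,a',b'} = nb E v - {a,b,b'}" using a' by auto
    have "card (nb E v) - card {a,b,b'} \<le> card (nb E v - {a,b,b'})" by (rule card_diff_le) simp
    then have "n - 5 \<le> card (nb E v - {a,b,a',b'})" using card3[of a b b'] d eq by simp
    then have "contains_graph V E n (T1_edges n)"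
      using mkT[OF n G ed dist order_refl] by blast
    then show False using free by simp
  qed
qed



lemma nb_empty: "simple_graph_on V E \<Longrightarrow> x \<notin> V \<Longrightarrow> nb E x = {}"
  using nb_props(1) by (metis equals0I)

lemma big6:
  assumes n: "6 \<le> n" and G: "simple_graph_on V E" and free: "\<not> contains_graph V E n (T1_edges n)"
    and v: "v \<in> V" and d: "n - 1 \<le> card (nb E v)" and mx: "\<forall>x\<in>V. card (nb E x) \<le> card (nb E v)"
  shows "\<exists>S. S \<subseteq> V \<and> 2 * card {e\<in>E. e \<inter> S \<noteq> {}} + (n-2) \<le> (n-2) * card S"
proof -
  define S where "S = insert v (nb E v)"
  define Ev where "Ev = {e\<in>E. v \<notin> e \<and> e \<inter> nb E v \<noteq> {}}"
  have SV: "S \<subseteq> V" unfolding S_def using v nb_sub[OF G] by auto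
  have fE: "finite E" using E_fin[OF G] .
  have sub: "{e\<in>E. e \<inter> S \<noteq> {}} \<subseteq> {e\<in>E. v \<in> e} \<union> Ev" unfolding S_def Ev_def by auto
  have c1: "card {e\<in>E. v \<in> e} = card (nb E v)" using deg_eq[OF G] .
  have Dx: "card {e\<in>E. x \<in> e} \<le> card (nb E v)" for x
  proof (cases "x \<in> V")
    case True then show ?thesis using mx deg_eq[OF G, of x] by simp
  next
    case False then show ?thesis using deg_eq[OF G, of x] nb_empty[OF G False] by simp
  qed
  have c2: "card Ev \<le> card (nb E v)"
  proof (rule inter_bound[OF G])
    show "Ev \<subseteq> E" unfolding Ev_def by auto
    show "e1 \<inter> e2 \<noteq> {}" if "e1 \<in> Ev" "e2 \<in> Ev" for e1 e2
      using Ev_inter[OF _ G free d, of e1 e2] that n unfolding Ev_def by auto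
    show "card {e\<in>E. x \<in> e} \<le> card (nb E v)" for x using Dx .
    show "3 \<le> card (nb E v)" using d n by linarith
  qed
  have "card {e\<in>E. e \<inter> S \<noteq> {}} \<le> card ({e\<in>E. v \<in> e} \<union> Ev)"
    using sub fE by (intro card_mono) (auto simp: Ev_def)
  also have "\<dots> \<le> card {e\<in>E. v \<in> e} + card Ev" by (rule card_Un_le)
  finally have ce: "card {e\<in>E. e \<inter> S \<noteq> {}} \<le> 2 * card (nb E v)" using c1 c2 by linarith
  have cS: "card S = card (nb E v) + 1"
    unfolding S_def using nb_fin[OF G] nb_irr[OF G] by simp
  have "4 * card (nb E v) \<le> (n-2) * card (nb E v)" using n by (intro mult_le_mono1) linarith
  then have "2 * card {e\<in>E. e \<inter> S \<noteq> {}} + (n-2) \<le> (n-2) * card S"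
    using ce cS by (simp add: algebra_simps)
  then show ?thesis using SV by blast
qed



lemma big5:
  assumes G: "simple_graph_on V E" and free: "\<not> contains_graph V E 5 (T1_edges 5)"
    and v: "v \<in> V" and d: "4 \<le> card (nb E v)"
  shows "\<exists>S. S \<subseteq> V \<and> 2 * card {e\<in>E. e \<inter> S \<noteq> {}} + 3 \<le> 3 * card S"
proof -
  have T: False if "{c,a} \<in> E" "{c,b} \<in> E" "{a,a'} \<in> E" "{b,b'} \<in> E" "distinct [c,a,b,a',b']"
    for c a b a' b'
  proof -
    have "contains_graph V E 5 (T1_edges 5)"
      using mkT[where n=5 and L="{}", OF _ G that] by simp
    then show False using free by simp
  qed
  have sym: "\<And>x y. (x \<in> nb E y) = (y \<in> nb E x)" using nb_sym[OF G] by metis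
  have sy: "\<And>x y. x \<in> nb E y \<Longrightarrow> y \<in> nb E x" using nb_props(4)[OF G] by metis
  have nbE': "\<And>x y. x \<in> nb E y \<Longrightarrow> {x,y} \<in> E" using nbE sy by metis
  have irr: "\<And>x. x \<notin> nb E x" using nb_irr[OF G] by blast
  have fE: "finite E" using E_fin[OF G] .
  have fin: "finite (nb E v)" using nb_fin[OF G] .
  have two: "\<exists>w. w \<in> nb E v \<and> w \<noteq> x \<and> w \<noteq> z" for x z
  proof -
    have "card (nb E v) - card {x,z} \<le> card (nb E v - {x,z})" by (rule card_diff_le) simp
    then have "0 < card (nb E v - {x,z})" using card2[of x z] d by linarith
    then obtain w where "w \<in> nb E v - {x,z}" by (metis card_gt_0_iff ex_in_conv)
    then show ?thesis by blast
  qed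
  have three: "\<exists>w. w \<in> nb E v \<and> w \<noteq> x \<and> w \<noteq> y \<and> w \<noteq> z" for x y z
  proof -
    have "card (nb E v) - card {x,y,z} \<le> card (nb E v - {x,y,z})" by (rule card_diff_le) simp
    then have "0 < card (nb E v - {x,y,z})" using card3[of x y z] d by linarith
    then obtain w where "w \<in> nb E v - {x,y,z}" by (metis card_gt_0_iff ex_in_conv)
    then show ?thesis by blast
  qed
  have cv: "card {e\<in>E. v \<in> e} = card (nb E v)" using deg_eq[OF G] .
  show ?thesis
  proof (cases "\<exists>x\<in>nb E v. \<exists>y\<in>nb E x. y \<notin> insert v (nb E v)")
    case True
    then obtain x y where x: "x \<in> nb E v" and y: "y \<in> nb E x" "y \<notin> insert v (nb E v)" by blast
    have zv: "nb E z = {v}" if z: "z \<in> nb E v" "z \<noteq> x" for z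
    proof
      show "{v} \<subseteq> nb E z" using sy[OF z(1)] by simp
      show "nb E z \<subseteq> {v}"
      proof
        fix w assume w: "w \<in> nb E z"
        show "w \<in> {v}"
        proof (rule ccontr)
          assume wv: "w \<notin> {v}"
          obtain z2 where z2: "z2 \<in> nb E v" "z2 \<noteq> x" "z2 \<noteq> z" using two by blast
          consider "w = y" | "w = x" | "w \<noteq> x \<and> w \<noteq> y" by blast
          then show False
          proof cases
            case 1
            show False
            proof (rule T[of x y v z z2])
              show "{x,y} \<in> E" using nbE[OF y(1)] .
              show "{x,v} \<in> E" using nbE'[OF x] .
              show "{y,z} \<in> E" using nbE'[OF w] 1 by simp
              show "{v,z2} \<in> E" using nbE[OF z2(1)] .
              show "distinct [x,y,v,z,z2]" using x y z z2 irr by auto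
            qed
          next
            case 2
            show False
            proof (rule T[of z x v y z2])
              show "{z,x} \<in> E" using nbE[OF w] 2 by simp
              show "{z,v} \<in> E" using nbE'[OF z(1)] .
              show "{x,y} \<in> E" using nbE[OF y(1)] .
              show "{v,z2} \<in> E" using nbE[OF z2(1)] .
              show "distinct [z,x,v,y,z2]" using x y z z2 irr by auto
            qed
          next
            case 3
            show False
            proof (rule T[of v x z y w])
              show "{v,x} \<in> E" using nbE[OF x] .
              show "{v,z} \<in> E" using nbE[OF z(1)] .
              show "{x,y} \<in> E" using nbE[OF y(1)] .
              show "{z,w} \<in> E" using nbE[OF w] .
              show "distinct [v,x,z,y,w]" using x y z 3 wv w irr by auto
            qed
          qed
        qed
      qed
    qed
    have xz: "nb E x \<inter> nb E v = {}"
    proof (rule ccontr)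
      assume "nb E x \<inter> nb E v \<noteq> {}"
      then obtain z where z: "z \<in> nb E x" "z \<in> nb E v" by blast
      have zx: "z \<noteq> x" using z irr by auto
      then have "nb E z = {v}" using zv[OF z(2) zx] by simp
      moreover have "x \<in> nb E z" using sy[OF z(1)] .
      ultimately show False using x irr by auto
    qed
    have yx: "nb E y' = {x}" if y': "y' \<in> nb E x" "y' \<noteq> v" for y'
    proof
      show "{x} \<subseteq> nb E y'" using sy[OF y'(1)] by simp
      have y'v: "y' \<notin> nb E v" using xz y' by blast
      show "nb E y' \<subseteq> {x}"
      proof
        fix w assume w: "w \<in> nb E y'"
        show "w \<in> {x}"
        proof (rule ccontr)
          assume wx: "w \<notin> {x}"
          have wv: "w \<noteq> v" using sy[OF w] y'v by metis
          have wnv: "w \<notin> nb E v"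
          proof
            assume wnb: "w \<in> nb E v"
            have "w \<noteq> x" using wx by simp
            then have "nb E w = {v}" using zv[OF wnb] by simp
            moreover have "y' \<in> nb E w" using sy[OF w] .
            ultimately show False using y' by auto
          qed
          obtain z where z: "z \<in> nb E v" "z \<noteq> x" "z \<noteq> x" using two by blast
          show False
          proof (rule T[of x y' v w z])
            show "{x,y'} \<in> E" using nbE[OF y'(1)] .
            show "{x,v} \<in> E" using nbE'[OF x] .
            show "{y',w} \<in> E" using nbE[OF w] .
            show "{v,z} \<in> E" using nbE[OF z(1)] .
            show "distinct [x,y',v,w,z]" using x y' y'v z wx wv wnv w irr by auto
          qed
        qed
      qed
    qed
    define S where "S = insert v (nb E v) \<union> (nb E x - {v})"
    have SV: "S \<subseteq> V" unfolding S_def using v nb_sub[OF G] by auto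
    have xv: "{x,v} \<in> E" using nbE'[OF x] .
    have sub: "{e\<in>E. e \<inter> S \<noteq> {}} \<subseteq> {e\<in>E. v \<in> e} \<union> ({e\<in>E. x \<in> e} - {{x,v}})"
    proof
      fix e assume e: "e \<in> {e\<in>E. e \<inter> S \<noteq> {}}"
      then obtain s where s: "s \<in> e" "s \<in> S" by blast
      obtain p q where pq: "e = {p,q}" "p \<noteq> q" using edge_form[OF G] e by blast
      obtain t where t: "e = {s,t}" using pq s by auto
      have tn: "t \<in> nb E s" using e t unfolding nb_def by simp
      consider "s = v" | "s = x" | "s \<in> nb E v" "s \<noteq> x" | "s \<in> nb E x" "s \<noteq> v"
        using s unfolding S_def by blast
      then show "e \<in> {e\<in>E. v \<in> e} \<union> ({e\<in>E. x \<in> e} - {{x,v}})"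
      proof cases
        case 1 then show ?thesis using e t by auto
      next
        case 2
        show ?thesis
        proof (cases "t = v")
          case True then show ?thesis using e t by auto
        next
          case False
          then have "e \<noteq> {x,v}" using t 2 by (auto simp: doubleton_eq_iff)
          then show ?thesis using e t 2 by auto
        qed
      next
        case 3
        then have "t = v" using zv[OF 3] tn by simp
        then show ?thesis using e t by auto
      next
        case 4
        then have "t = x" using yx[OF 4] tn by simp
        moreover have "e \<noteq> {x,v}" using t 4 \<open>t = x\<close> by (auto simp: doubleton_eq_iff)
        ultimately show ?thesis using e t by auto
      qed
    qed
    have c2: "card ({e\<in>E. x \<in> e} - {{x,v}}) = card (nb E x) - 1"
      using deg_eq[OF G, of x] xv fE by (simp add: card_Diff_singleton)
    have "card {e\<in>E. e \<inter> S \<noteq> {}} \<le> card ({e\<in>E. v \<in> e} \<union> ({e\<in>E. x \<in> e} - {{x,v}}))"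
      using sub fE by (intro card_mono) auto
    also have "\<dots> \<le> card {e\<in>E. v \<in> e} + card ({e\<in>E. x \<in> e} - {{x,v}})" by (rule card_Un_le)
    finally have ce: "card {e\<in>E. e \<inter> S \<noteq> {}} \<le> card (nb E v) + (card (nb E x) - 1)"
      using cv c2 by linarith
    have vx: "v \<in> nb E x" using sy[OF x] .
    have dj: "insert v (nb E v) \<inter> (nb E x - {v}) = {}" using xz by blast
    have cS: "card S = (card (nb E v) + 1) + (card (nb E x) - 1)"
      unfolding S_def
      using card_Un_disjoint[OF _ _ dj] fin nb_fin[OF G, of x] irr vx
      by (simp add: card_Diff_singleton)
    have "1 \<le> card (nb E x)" using vx nb_fin[OF G, of x] by (metis One_nat_def Suc_leI card_gt_0_iff empty_iff)
    then have "2 * card {e\<in>E. e \<inter> S \<noteq> {}} + 3 \<le> 3 * card S" using ce cS by linarith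
    then show ?thesis using SV by blast
  next
    case False
    then have cl: "\<And>x y. x \<in> nb E v \<Longrightarrow> y \<in> nb E x \<Longrightarrow> y \<in> insert v (nb E v)" by blast
    have one: "y = z" if "x \<in> nb E v" "y \<in> nb E x" "z \<in> nb E x" "y \<in> nb E v" "z \<in> nb E v" for x y z
    proof (rule ccontr)
      assume yz: "y \<noteq> z"
      obtain w where w: "w \<in> nb E v" "w \<noteq> x" "w \<noteq> y" "w \<noteq> z" using three by blast
      show False
      proof (rule T[of z x v y w])
        show "{z,x} \<in> E" using nbE'[OF that(3)] .
        show "{z,v} \<in> E" using nbE'[OF that(5)] .
        show "{x,y} \<in> E" using nbE[OF that(2)] .
        show "{v,w} \<in> E" using nbE[OF w(1)] .
        show "distinct [z,x,v,y,w]" using that yz w irr by auto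
      qed
    qed
    define Ev where "Ev = {e\<in>E. v \<notin> e \<and> e \<inter> nb E v \<noteq> {}}"
    have Evs: "\<exists>s t. e = {s,t} \<and> s \<in> nb E v \<and> t \<in> nb E v \<and> t \<in> nb E s" if e: "e \<in> Ev" for e
    proof -
      obtain s where s: "s \<in> e" "s \<in> nb E v" using e unfolding Ev_def by blast
      obtain p q where pq: "e = {p,q}" "p \<noteq> q" using edge_form[OF G] e unfolding Ev_def by blast
      obtain t where t: "e = {s,t}" using pq s by auto
      have tn: "t \<in> nb E s" using e t unfolding nb_def Ev_def by simp
      have "t \<noteq> v" using e t unfolding Ev_def by auto
      then have "t \<in> nb E v" using cl[OF s(2) tn] by simp
      then show ?thesis using s t tn by blast
    qed
    have cEv: "card Ev \<le> 1"
    proof -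
      have "finite Ev" using fE unfolding Ev_def by simp
      moreover have "\<forall>e1\<in>Ev. \<forall>e2\<in>Ev. e1 = e2"
      proof (intro ballI)
        fix e1 e2 assume e1: "e1 \<in> Ev" and e2: "e2 \<in> Ev"
        have "e1 \<inter> e2 \<noteq> {}"
          using Ev_inter[OF _ G free, of v e1 e2] e1 e2 d unfolding Ev_def by auto
        then obtain s where s: "s \<in> e1" "s \<in> e2" by blast
        obtain s1 t1 where st1: "e1 = {s1,t1}" "s1 \<in> nb E v" "t1 \<in> nb E v" "t1 \<in> nb E s1"
          using Evs[OF e1] by blast
        obtain s2 t2 where st2: "e2 = {s2,t2}" "s2 \<in> nb E v" "t2 \<in> nb E v" "t2 \<in> nb E s2"
          using Evs[OF e2] by blast
        have ex: "\<exists>u. e = {s,u} \<and> u \<in> nb E s \<and> u \<in> nb E v \<and> s \<in> nb E v"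
          if "e = {s',t'}" "s' \<in> nb E v" "t' \<in> nb E v" "t' \<in> nb E s'" "s \<in> e" for e s' t'
        proof (cases "s = s'")
          case True then show ?thesis using that by blast
        next
          case False then have "s = t'" using that by auto
          moreover have "{t',s'} = {s',t'}" by (simp add: insert_commute)
          ultimately show ?thesis using that sy[OF that(4)] by (intro exI[of _ s']) simp
        qed
        obtain u1 where u1: "e1 = {s,u1}" "u1 \<in> nb E s" "u1 \<in> nb E v" "s \<in> nb E v"
          using ex[OF st1 s(1)] by blast
        obtain u2 where u2: "e2 = {s,u2}" "u2 \<in> nb E s" "u2 \<in> nb E v"
          using ex[OF st2 s(2)] by blast
        have "u1 = u2" using one[OF u1(4) u1(2) u2(2) u1(3) u2(3)] .
        then show "e1 = e2" using u1 u2 by simp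
      qed
      ultimately show ?thesis using card_le_Suc0_iff_eq by auto
    qed
    define S where "S = insert v (nb E v)"
    have SV: "S \<subseteq> V" unfolding S_def using v nb_sub[OF G] by auto
    have sub: "{e\<in>E. e \<inter> S \<noteq> {}} \<subseteq> {e\<in>E. v \<in> e} \<union> Ev" unfolding S_def Ev_def by auto
    have "card {e\<in>E. e \<inter> S \<noteq> {}} \<le> card ({e\<in>E. v \<in> e} \<union> Ev)"
      using sub fE by (intro card_mono) (auto simp: Ev_def)
    also have "\<dots> \<le> card {e\<in>E. v \<in> e} + card Ev" by (rule card_Un_le)
    finally have ce: "card {e\<in>E. e \<inter> S \<noteq> {}} \<le> card (nb E v) + 1" using cv cEv by linarith
    have cS: "card S = card (nb E v) + 1"
      unfolding S_def using fin irr by simp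
    have "2 * card {e\<in>E. e \<inter> S \<noteq> {}} + 3 \<le> 3 * card S" using ce cS d by linarith
    then show ?thesis using SV by blast
  qed
qed



lemma arith1: "5 \<le> (n::nat) \<Longrightarrow> 3*n - 9 \<le> (n-2)*(n-3)"
proof -
  assume "5 \<le> n"
  then obtain m where m: "n = m + 5" by (metis add.commute le_Suc_ex)
  have "(n-2)*(n-3) = (m+3)*(m+2)" using m by simp
  also have "\<dots> = m*m + 5*m + 6" by (simp add: algebra_simps)
  finally show ?thesis using m by simp
qed

lemma arith2: "6 \<le> (n::nat) \<Longrightarrow> 2*n - 2 \<le> (n-2)*(n-3)"
proof -
  assume "6 \<le> n"
  then obtain m where m: "n = m + 6" by (metis add.commute le_Suc_ex)
  have "(n-2)*(n-3) = m*m + 7*m + 12" using m by (simp add: algebra_simps)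
  then show ?thesis using m by simp
qed

lemma keyA:
  assumes n: "5 \<le> n" and G: "simple_graph_on V E" and free: "\<not> contains_graph V E n (T1_edges n)"
    and d: "card (nb E v) = n - 2" and mx: "\<forall>x\<in>V. card (nb E x) \<le> n - 2"
    and a: "a \<in> nb E v" and a': "a' \<in> nb E a" "a' \<notin> nb E v" "a' \<noteq> v"
  shows "(\<Sum>x\<in>nb E v. card (nb E x)) \<le> (n-2)*(n-3)"
proof -
  have sy: "\<And>x y. x \<in> nb E y \<Longrightarrow> y \<in> nb E x" using nb_props(4)[OF G] by metis
  have irr: "\<And>x. x \<notin> nb E x" using nb_irr[OF G] by blast
  have fin: "\<And>x. finite (nb E x)" using nb_fin[OF G] by blast
  have inV: "\<And>x y. x \<in> nb E y \<Longrightarrow> x \<in> V" using nb_props(2)[OF G] by metis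
  define B where "B = nb E v - {a}"
  have cB: "card B = n - 3" unfolding B_def using a d fin by (simp add: card_Diff_singleton)
  have fB: "finite B" unfolding B_def using fin by simp
  have split: "(\<Sum>x\<in>nb E v. card (nb E x)) = card (nb E a) + (\<Sum>x\<in>B. card (nb E x))"
    unfolding B_def using sum.remove[OF fin a] .
  have da: "card (nb E a) \<le> n - 2" using mx inV[OF a] by blast
  have cA: "nb E b \<subseteq> {v,a,a'}" if "b \<in> B" for b
    using claimA[OF n G free d a a'] that unfolding B_def by blast
  show ?thesis
  proof (cases "\<exists>b\<in>B. a' \<in> nb E b")
    case False
    have db: "card (nb E b) \<le> (if b \<in> nb E a then 2 else 1)" if b: "b \<in> B" for b
    proof (cases "b \<in> nb E a")
      case True
      have "nb E b \<subseteq> {v,a}" using cA[OF b] False b by blast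
      then have "card (nb E b) \<le> card {v,a}" by (intro card_mono) auto
      then show ?thesis using True card2[of v a] by simp
    next
      case nba: False
      have "a \<notin> nb E b" using nba sy by blast
      then have "nb E b \<subseteq> {v}" using cA[OF b] False b by blast
      then have "card (nb E b) \<le> card {v}" by (intro card_mono) auto
      then show ?thesis using nba by simp
    qed
    have "(\<Sum>x\<in>B. card (nb E x)) \<le> (\<Sum>x\<in>B. (if x \<in> nb E a then 2 else 1))"
      by (rule sum_mono) (rule db)
    also have "\<dots> = (\<Sum>x\<in>B. 1 + (if x \<in> nb E a then 1 else 0))"
      by (intro sum.cong) auto
    also have "\<dots> = card B + (\<Sum>x\<in>B. (if x \<in> nb E a then 1 else 0))"
      unfolding sum.distrib by simp
    also have "(\<Sum>x\<in>B. (if x \<in> nb E a then 1 else 0)) = card {x\<in>B. x \<in> nb E a}"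
      using fB by (simp add: sum.inter_filter[symmetric])
    finally have s1: "(\<Sum>x\<in>B. card (nb E x)) \<le> card B + card {x\<in>B. x \<in> nb E a}" .
    have "{x\<in>B. x \<in> nb E a} \<subseteq> nb E a - {v,a'}" unfolding B_def using a' irr by auto
    then have "card {x\<in>B. x \<in> nb E a} \<le> card (nb E a - {v,a'})" using fin by (intro card_mono) auto
    also have "\<dots> = card (nb E a) - 2"
    proof -
      have "{v,a'} \<subseteq> nb E a" using sy[OF a] a' by auto
      then have "card (nb E a - {v,a'}) = card (nb E a) - card {v,a'}"
        using fin by (intro card_Diff_subset) auto
      then show ?thesis using a' by simp
    qed
    finally have s2: "card {x\<in>B. x \<in> nb E a} \<le> card (nb E a) - 2" .
    have "(\<Sum>x\<in>nb E v. card (nb E x)) \<le> 3*n - 9" using split s1 s2 cB da n by linarith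
    then show ?thesis using arith1[OF n] by linarith
  next
    case True
    then obtain b where b: "b \<in> B" "a' \<in> nb E b" by blast
    have bv: "b \<in> nb E v" "b \<noteq> a" using b unfolding B_def by auto
    have cBb: "nb E x \<subseteq> {v,b,a'}" if "x \<in> nb E v" "x \<noteq> b" for x
      using claimA[OF n G free d bv(1) b(2) a'(2) a'(3) that] .
    show ?thesis
    proof (cases "n = 5")
      case True
      have "card (B - {b}) = 1" using cB b True fB by (simp add: card_Diff_singleton)
      then obtain b2 where b2: "b2 \<in> B" "b2 \<noteq> b" by (metis Diff_iff card_1_singletonE insertI1 singletonD)
      have b2v: "b2 \<in> nb E v" "b2 \<noteq> a" using b2 unfolding B_def by auto
      have "contains_graph V E 5 (T1_edges 5)"
      proof (rule mkT[where L="{}", OF _ G])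
        show "{a,v} \<in> E" using nbE[OF sy[OF a]] .
        show "{a,a'} \<in> E" using nbE[OF a'(1)] .
        show "{v,b2} \<in> E" using nbE[OF b2v(1)] .
        show "{a',b} \<in> E" using nbE[OF sy[OF b(2)]] .
        show "distinct [a,v,a',b2,b]" using a a' b2v bv b2 irr by auto
      qed auto
      then show ?thesis using free True by simp
    next
      case False
      have c1: "card (nb E a) \<le> 3"
      proof -
        have "card (nb E a) \<le> card {v,b,a'}" using cBb[OF a bv(2)[symmetric]] by (intro card_mono) auto
        then show ?thesis using card3[of v b a'] by linarith
      qed
      have c2: "card (nb E b) \<le> 3"
      proof -
        have "card (nb E b) \<le> card {v,a,a'}" using cA[OF b(1)] by (intro card_mono) auto
        then show ?thesis using card3[of v a a'] by linarith
      qed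
      have c3: "card (nb E x) \<le> 2" if x: "x \<in> B - {b}" for x
      proof -
        have "nb E x \<subseteq> {v,a'}" using cA[of x] cBb[of x] x bv unfolding B_def by auto
        then have "card (nb E x) \<le> card {v,a'}" by (intro card_mono) auto
        then show ?thesis using card2[of v a'] by linarith
      qed
      have "(\<Sum>x\<in>B. card (nb E x)) = card (nb E b) + (\<Sum>x\<in>B - {b}. card (nb E x))"
        using sum.remove[OF fB b(1)] .
      also have "(\<Sum>x\<in>B - {b}. card (nb E x)) \<le> (\<Sum>x\<in>B - {b}. 2)" by (rule sum_mono) (rule c3)
      also have "\<dots> = 2 * (n - 4)" using cB b fB by (simp add: card_Diff_singleton)
      finally have "(\<Sum>x\<in>B. card (nb E x)) \<le> card (nb E b) + 2 * (n-4)" by simp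
      then have "(\<Sum>x\<in>nb E v. card (nb E x)) \<le> 2*n - 2" using split c1 c2 n by linarith
      then show ?thesis using arith2[of n] False n by linarith
    qed
  qed
qed



lemma main:
  fixes V :: "'a set"
  assumes n: "5 \<le> n" and G0: "simple_graph_on V E" and F0: "\<not> contains_graph V E n (T1_edges n)"
  shows "2 * card E \<le> (n-2) * card V \<and> (\<not> (n-1) dvd card V \<longrightarrow> 2 * card E + (n-2) \<le> (n-2) * card V)"
  using G0 F0
proof (induction "card V" arbitrary: V E rule: less_induct)
  case less
  have G: "simple_graph_on V E" using less.prems(1) .
  have free: "\<not> contains_graph V E n (T1_edges n)" using less.prems(2) .
  have fV: "finite V" using G unfolding simple_graph_on_def by simp
  have IH: "2 * card {e\<in>E. e \<subseteq> W} \<le> (n-2) * card W \<and>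
      (\<not> (n-1) dvd card W \<longrightarrow> 2 * card {e\<in>E. e \<subseteq> W} + (n-2) \<le> (n-2) * card W)"
    if W: "W \<subseteq> V" "card W < card V" for W
    using less.hyps[OF W(2) restrict_sg[OF G W(1)] restrict_free[OF free W(1)]] .
  have piece': "?case" if S: "S \<subseteq> V" "2 * card {e\<in>E. e \<inter> S \<noteq> {}} + (n-2) \<le> (n-2) * card S" for S
  proof -
    have "card S \<noteq> 0"
    proof
      assume "card S = 0"
      then show False using S(2) n by simp
    qed
    then have "S \<noteq> {}" by auto
    then have "V - S \<subset> V" using S(1) by blast
    then have "card (V - S) < card V" using fV by (rule psubset_card_mono[rotated])
    then have "2 * card {e\<in>E. e \<subseteq> V - S} \<le> (n-2) * card (V - S)" using IH[of "V - S"] by blast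
    then have "2 * card E + (n-2) \<le> (n-2) * card V" using piece[OF G S(1) _ S(2)] by blast
    then show ?thesis by linarith
  qed
  show ?case
  proof (cases "V = {}")
    case True
    have "E = {}"
    proof (rule equals0I)
      fix e assume "e \<in> E"
      then have "e \<subseteq> V" "card e = 2" using G unfolding simple_graph_on_def by auto
      then show False using True by simp
    qed
    then show ?thesis using True by simp
  next
    case nonempty: False
    have "Max ((\<lambda>x. card (nb E x)) ` V) \<in> (\<lambda>x. card (nb E x)) ` V"
      using fV nonempty by (intro Max_in) auto
    then obtain v where v: "v \<in> V" and vM: "card (nb E v) = Max ((\<lambda>x. card (nb E x)) ` V)" by auto
    have mx: "\<forall>x\<in>V. card (nb E x) \<le> card (nb E v)" using vM fV by simp
    show ?thesis
    proof (cases "n - 1 \<le> card (nb E v)")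
      case True
      show ?thesis
      proof (cases "n = 5")
        case n5: True
        obtain S where "S \<subseteq> V" "2 * card {e\<in>E. e \<inter> S \<noteq> {}} + 3 \<le> 3 * card S"
          using big5[OF G _ v] free True n5 by auto
        then show ?thesis using piece' n5 by simp
      next
        case False
        then have n6: "6 \<le> n" using n by simp
        obtain S where "S \<subseteq> V" "2 * card {e\<in>E. e \<inter> S \<noteq> {}} + (n-2) \<le> (n-2) * card S"
          using big6[OF n6 G free v True mx] by blast
        then show ?thesis using piece' by blast
      qed
    next
      case small: False
      have dmax: "\<forall>x\<in>V. card (nb E x) \<le> n - 2" using mx small by force
      show ?thesis
      proof (cases "\<exists>C. C \<subseteq> V \<and> C \<noteq> {} \<and> C \<noteq> V \<and> (\<forall>e\<in>E. e \<subseteq> C \<or> e \<subseteq> V - C)")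
        case True
        then obtain C where C: "C \<subseteq> V" "C \<noteq> {}" "C \<noteq> V" and sep: "\<forall>e\<in>E. e \<subseteq> C \<or> e \<subseteq> V - C" by blast
        have fE: "finite E" using E_fin[OF G] .
        have Eu: "E = {e\<in>E. e \<subseteq> C} \<union> {e\<in>E. e \<subseteq> V - C}" using sep by blast
        have dj: "{e\<in>E. e \<subseteq> C} \<inter> {e\<in>E. e \<subseteq> V - C} = {}"
        proof (rule ccontr)
          assume "{e\<in>E. e \<subseteq> C} \<inter> {e\<in>E. e \<subseteq> V - C} \<noteq> {}"
          then obtain e where e: "e \<in> E" "e \<subseteq> C" "e \<subseteq> V - C" by blast
          obtain x y where "e = {x,y}" using edge_form[OF G e(1)] by blast
          then show False using e by auto
        qed
        have cE: "card E = card {e\<in>E. e \<subseteq> C} + card {e\<in>E. e \<subseteq> V - C}"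
          using card_Un_disjoint[OF _ _ dj] fE Eu by (metis (no_types, lifting) finite_Un)
        have "C \<subset> V" using C by blast
        then have c1: "card C < card V" using fV by (rule psubset_card_mono[rotated])
        have "V - C \<subset> V" using C by blast
        then have c2: "card (V - C) < card V" using fV by (rule psubset_card_mono[rotated])
        have fC: "finite C" using C(1) fV finite_subset by blast
        have "card (V - C) = card V - card C" using card_Diff_subset[OF fC C(1)] .
        moreover have "card C \<le> card V" using c1 by simp
        ultimately have cV: "card V = card C + card (V - C)" by simp
        note I1 = IH[OF C(1) c1]
        note I2 = IH[OF Diff_subset c2]
        have eq: "(n-2)*card V = (n-2)*card C + (n-2)*card (V-C)" using cV by (simp add: add_mult_distrib2)
        have A: "2 * card E \<le> (n-2) * card V" using cE eq I1 I2 by linarith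
        have B: "2 * card E + (n-2) \<le> (n-2) * card V" if nd: "\<not> (n-1) dvd card V"
        proof -
          have "\<not> (n-1) dvd card C \<or> \<not> (n-1) dvd card (V - C)"
            using nd cV by (metis dvd_add)
          then show ?thesis using cE eq I1 I2 by linarith
        qed
        show ?thesis using A B by blast
      next
        case conn: False
        have hs: "(\<Sum>x\<in>V. card (nb E x)) = 2 * card E" using handshake[OF G] .
        have irr: "\<And>x. x \<notin> nb E x" using nb_irr[OF G] by blast
        have fin: "\<And>x. finite (nb E x)" using nb_fin[OF G] by blast
        have p1: "1 \<le> card V" using nonempty fV by (simp add: Suc_le_eq card_gt_0_iff)
        show ?thesis
        proof (cases "card V \<le> n - 1")
          case True
          have degp: "card (nb E x) \<le> card V - 1" if "x \<in> V" for x
          proof -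
            have "nb E x \<subseteq> V - {x}" using nb_sub[OF G] irr by blast
            then have "card (nb E x) \<le> card (V - {x})" using fV by (intro card_mono) auto
            then show ?thesis using that fV by (simp add: card_Diff_singleton)
          qed
          have "(\<Sum>x\<in>V. card (nb E x)) \<le> card V * (card V - 1)"
            using sum_bounded_above[of V "\<lambda>x. card (nb E x)" "card V - 1"] degp by simp
          then have e2: "2 * card E \<le> card V * (card V - 1)" using hs by simp
          show ?thesis
          proof (cases "card V = n - 1")
            case True
            have "card V - 1 = n - 2" using True by simp
            then have "2 * card E \<le> card V * (n-2)" using e2 by simp
            then have "2 * card E \<le> (n-2) * card V" by (simp add: mult.commute)
            moreover have "(n-1) dvd card V" using True by simp
            ultimately show ?thesis by blast
          next
            case False
            then have "card V \<le> n - 2" using \<open>card V \<le> n - 1\<close> by simp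
            then have "card V * (card V - 1) \<le> (n-2) * (card V - 1)" by (rule mult_le_mono1)
            moreover have "(n-2) * (card V - 1) + (n-2) = (n-2) * card V"
            proof -
              have "card V = Suc (card V - 1)" using p1 by simp
              then have "(n-2) * card V = (n-2) * (card V - 1) + (n-2)" by (metis mult_Suc_right add.commute)
              then show ?thesis by simp
            qed
            ultimately show ?thesis using e2 by linarith
          qed
        next
          case big: False
          show ?thesis
          proof (cases "card (nb E v) \<le> n - 3")
            case True
            have "(\<Sum>x\<in>V. card (nb E x)) \<le> card V * (n - 3)"
              using sum_bounded_above[of V "\<lambda>x. card (nb E x)" "n - 3"] mx True by force
            moreover have "card V * (n-3) + (n-2) \<le> (n-2) * card V"
            proof -
              have "n - 2 = Suc (n-3)" using n by simp
              then have "(n-2) * card V = (n-3) * card V + card V" by simp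
              then show ?thesis using big by (simp add: mult.commute)
            qed
            ultimately show ?thesis using hs by linarith
          next
            case False
            then have d: "card (nb E v) = n - 2" using small by linarith
            define C where "C = insert v (nb E v)"
            have CV: "C \<subseteq> V" unfolding C_def using v nb_sub[OF G] by auto
            have cC: "card C = n - 1" unfolding C_def using d fin irr n by simp
            have "C \<noteq> V" using cC big by auto
            moreover have "C \<noteq> {}" unfolding C_def by simp
            ultimately obtain e where e: "e \<in> E" "\<not> e \<subseteq> C" "\<not> e \<subseteq> V - C" using conn CV by blast
            have eV: "e \<subseteq> V" using G e(1) unfolding simple_graph_on_def by blast
            obtain t where t: "t \<in> e" "t \<notin> C" using e(2) by blast
            obtain s where s: "s \<in> e" "s \<in> C" using e(3) eV by blast
            have st: "s \<noteq> t" using s t by auto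
            obtain x y where xy: "e = {x,y}" using edge_form[OF G e(1)] by blast
            have est: "e = {s,t}" using xy s t st by auto
            have tn: "t \<in> nb E s" using e(1) est unfolding nb_def by simp
            have sv: "s \<noteq> v"
            proof
              assume "s = v"
              then have "t \<in> C" using tn unfolding C_def by simp
              then show False using t by simp
            qed
            have a: "s \<in> nb E v" using s sv unfolding C_def by simp
            have a': "t \<notin> nb E v" "t \<noteq> v" using t unfolding C_def by auto
            have key: "(\<Sum>x\<in>nb E v. card (nb E x)) \<le> (n-2)*(n-3)"
              using keyA[OF n G free d dmax a tn a'] .
            have sub: "nb E v \<subseteq> V" using nb_sub[OF G] .
            have "(\<Sum>x\<in>V. card (nb E x)) = (\<Sum>x\<in>V - nb E v. card (nb E x)) + (\<Sum>x\<in>nb E v. card (nb E x))"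
              using sum.subset_diff[OF sub fV] .
            moreover have "(\<Sum>x\<in>V - nb E v. card (nb E x)) \<le> (card V - (n-2)) * (n-2)"
            proof -
              have cD: "card (V - nb E v) = card V - (n-2)"
                using card_Diff_subset[OF fin sub] d by simp
              have "(\<Sum>x\<in>V - nb E v. card (nb E x)) \<le> card (V - nb E v) * (n-2)"
                using sum_bounded_above[of "V - nb E v" "\<lambda>x. card (nb E x)" "n - 2"] dmax by force
              then show ?thesis using cD by simp
            qed
            ultimately have S: "2 * card E \<le> (card V - (n-2)) * (n-2) + (n-2)*(n-3)" using hs key by linarith
            have "(card V - (n-2)) * (n-2) + (n-2)*(n-3) + (n-2) = (n-2) * ((card V - (n-2)) + (n-3) + 1)"
              by (simp add: algebra_simps)
            also have "(card V - (n-2)) + (n-3) + 1 = card V" using big n by linarith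
            finally have "2 * card E + (n-2) \<le> (n-2) * card V" using S by linarith
            then show ?thesis by linarith
          qed
        qed
      qed
    qed
  qed
qed



lemma dchar: "0 < (k::nat) \<Longrightarrow> (j div k = m) = (k*m \<le> j \<and> j < k*m + k)"
proof
  assume k: "0 < k" and jm: "j div k = m"
  have "j = k * m + j mod k" using jm mult_div_mod_eq[of k j] by simp
  moreover have "j mod k < k" using k by simp
  ultimately show "k*m \<le> j \<and> j < k*m + k" by linarith
next
  assume "0 < k" "k*m \<le> j \<and> j < k*m + k"
  then show "j div k = m" by (intro div_nat_eqI) auto
qed

definition blk :: "nat \<Rightarrow> nat \<Rightarrow> nat set set" where
  "blk k p = {{i,j} | i j. i < p \<and> j < p \<and> i \<noteq> j \<and> i div k = j div k}"

lemma blk_sg: "simple_graph_on {0..<p} (blk k p)"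
  unfolding simple_graph_on_def blk_def by auto

lemma blk_edge: "{x,y} \<in> blk k p \<Longrightarrow> x div k = y div k"
  unfolding blk_def by (auto simp: doubleton_eq_iff)

lemma blk_nb: "i < p \<Longrightarrow> nb (blk k p) i = {j. j < p \<and> j div k = i div k} - {i}"
  unfolding nb_def blk_def by (auto simp: doubleton_eq_iff)

lemma blk_free:
  assumes n: "5 \<le> n"
  shows "\<not> contains_graph {0..<p} (blk (n-1) p) n (T1_edges n)"
proof
  let ?k = "n - 1"
  assume "contains_graph {0..<p} (blk ?k p) n (T1_edges n)"
  then obtain f where inj: "inj_on f {0..<n}" and ed: "\<forall>e\<in>T1_edges n. f ` e \<in> blk ?k p"
    unfolding contains_graph_def by blast
  have s: "f i div ?k = f 0 div ?k" if "1 \<le> i" "i \<le> n - 3" for i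
  proof -
    have "{0,i} \<in> T1_edges n" unfolding T1_edges_def using that by (intro UnI1 CollectI exI[of _ i]) simp
    then have "f ` {0,i} \<in> blk ?k p" using ed by blast
    then have "{f 0, f i} \<in> blk ?k p" by simp
    then show ?thesis using blk_edge[of "f 0" "f i" ?k p] by simp
  qed
  have all: "f i div ?k = f 0 div ?k" if "i < n" for i
  proof -
    have "i = 0 \<or> (1 \<le> i \<and> i \<le> n-3) \<or> i = n-2 \<or> i = n-1" using that by linarith
    then consider "i = 0" | "1 \<le> i \<and> i \<le> n-3" | "i = n-2" | "i = n-1" by blast
    then show ?thesis
    proof cases
      case 3
      have "{n-4,n-2} \<in> T1_edges n" unfolding T1_edges_def by simp
      then have "f ` {n-4,n-2} \<in> blk ?k p" using ed by blast
      then have "{f (n-4), f (n-2)} \<in> blk ?k p" by simp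
      then have "f (n-2) div ?k = f (n-4) div ?k" using blk_edge[of "f (n-4)" "f (n-2)" ?k p] by simp
      then show ?thesis using s[of "n-4"] n 3 by simp
    next
      case 4
      have "{n-3,n-1} \<in> T1_edges n" unfolding T1_edges_def by simp
      then have "f ` {n-3,n-1} \<in> blk ?k p" using ed by blast
      then have "{f (n-3), f (n-1)} \<in> blk ?k p" by simp
      then have "f (n-1) div ?k = f (n-3) div ?k" using blk_edge[of "f (n-3)" "f (n-1)" ?k p] by simp
      then show ?thesis using s[of "n-3"] n 4 by simp
    next
      case 1 then show ?thesis by simp
    next
      case 2 then show ?thesis using s by blast
    qed
  qed
  let ?m = "f 0 div ?k"
  have sub: "f ` {0..<n} \<subseteq> {?k * ?m..<?k * ?m + ?k}"
  proof
    fix y assume "y \<in> f ` {0..<n}"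
    then obtain i where i: "i < n" "y = f i" by auto
    then have "y div ?k = ?m" using all[OF i(1)] by simp
    then show "y \<in> {?k * ?m..<?k * ?m + ?k}" using dchar[of ?k y ?m] n by simp
  qed
  have "card (f ` {0..<n}) \<le> card {?k * ?m..<?k * ?m + ?k}" by (rule card_mono[OF _ sub]) simp
  then have "card (f ` {0..<n}) \<le> ?k" by simp
  moreover have "card (f ` {0..<n}) = n" using card_image[OF inj] by simp
  ultimately show False using n by simp
qed

lemma blk_card:
  assumes k: "0 < k"
  shows "2 * card (blk k p) = k * (p div k) * (k - 1) + (p mod k) * (p mod k - 1)"
proof -
  define q where "q = p div k"
  define r where "r = p mod k"
  have pq: "p = k * q + r" unfolding q_def r_def by simp
  have r: "r < k" unfolding r_def using k by simp
  have kq: "k * q \<le> p" using pq by linarith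
  have pk: "p < k * q + k" using pq r by linarith
  have rq: "r = p - k * q" using pq by linarith
  have hs: "(\<Sum>i\<in>{0..<p}. card (nb (blk k p) i)) = 2 * card (blk k p)"
    using handshake[OF blk_sg] .
  have d1: "card (nb (blk k p) i) = k - 1" if i: "i \<in> {0..<k * q}" for i
  proof -
    define m where "m = i div k"
    have "m < q" using i less_mult_imp_div_less[of i q k] unfolding m_def by (simp add: mult.commute)
    then have "k * m + k \<le> k * q" by (metis Suc_leI mult_Suc_right mult_le_mono2 add.commute)
    then have mp: "k * m + k \<le> p" using kq by linarith
    have "{j. j < p \<and> j div k = m} = {k * m..<k * m + k}"
      using dchar[OF k] mp by auto
    then have "nb (blk k p) i = {k * m..<k * m + k} - {i}" using blk_nb[of i p k] i kq unfolding m_def by auto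
    moreover have "i \<in> {k * m..<k * m + k}" using dchar[OF k, of i m] unfolding m_def by simp
    ultimately show ?thesis by simp
  qed
  have d2: "card (nb (blk k p) i) = r - 1" if i: "i \<in> {k * q..<p}" for i
  proof -
    have iq: "i div k = q" using dchar[OF k, of i q] i pk by auto
    have "{j. j < p \<and> j div k = q} = {k * q..<p}"
      using dchar[OF k] pk by auto
    then have "{j. j < p \<and> j div k = i div k} = {k * q..<p}" using iq by simp
    then have "nb (blk k p) i = {k * q..<p} - {i}" using blk_nb[of i p k] i by auto
    then show ?thesis using i rq by simp
  qed
  have "(\<Sum>i\<in>{0..<p}. card (nb (blk k p) i)) =
      (\<Sum>i\<in>{0..<k * q}. card (nb (blk k p) i)) + (\<Sum>i\<in>{k * q..<p}. card (nb (blk k p) i))"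
    using sum.atLeastLessThan_concat[of 0 "k * q" p "\<lambda>i. card (nb (blk k p) i)"] kq by simp
  also have "\<dots> = (\<Sum>i\<in>{0..<k * q}. k - 1) + (\<Sum>i\<in>{k * q..<p}. r - 1)"
    using d1 d2 by simp
  also have "\<dots> = k * q * (k - 1) + r * (r - 1)" using rq by simp
  finally show ?thesis using hs unfolding q_def r_def by simp
qed



lemma real_lb:
  fixes K q R :: real
  shows "(K - 1)*(K*q + R)/2 - K^2/8 \<le> (K*q*(K-1) + R*(R-1))/2"
proof -
  have "(K*q*(K-1) + R*(R-1))/2 - ((K - 1)*(K*q + R)/2 - K^2/8) = (2*R-K)^2/8"
    by (simp add: power2_eq_square field_simps)
  moreover have "0 \<le> (2*R-K)^2/8" by simp
  ultimately show ?thesis by linarith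
qed

theorem corollary2p1:
  fixes p n :: nat
  assumes "5 \<le> n" and "n \<le> p" and "\<not> (n - 1) dvd p"
  shows "(real n - 2) * real p / 2 - (real n - 1)^2 / 8 \<le> real (ex_num p n (T1_edges n))
       \<and> real (ex_num p n (T1_edges n)) \<le> (real n - 2) * (real p - 1) / 2"
proof -
  have n: "5 \<le> n" using assms(1) .
  define Ss where "Ss = {card E | E. simple_graph_on {0..<p} E \<and> \<not> contains_graph {0..<p} E n (T1_edges n)}"
  have ex: "ex_num p n (T1_edges n) = Max Ss" unfolding ex_num_def Ss_def by simp
  have "Ss \<subseteq> card ` Pow (Pow {0..<p})"
    unfolding Ss_def simple_graph_on_def by auto
  then have fin: "finite Ss" by (rule finite_subset) simp
  have mem: "card (blk (n-1) p) \<in> Ss" unfolding Ss_def using blk_sg blk_free[OF n] by blast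
  have ne: "Ss \<noteq> {}" using mem by auto
  have low: "card (blk (n-1) p) \<le> Max Ss" using Max_ge[OF fin mem] .
  have "Max Ss \<in> Ss" using Max_in[OF fin ne] .
  then obtain E where E: "Max Ss = card E" "simple_graph_on {0..<p} E"
      "\<not> contains_graph {0..<p} E n (T1_edges n)" unfolding Ss_def by blast
  have up: "2 * Max Ss + (n-2) \<le> (n-2) * p"
    using main[OF n E(2) E(3)] assms(3) E(1) by simp
  have n2: "real (n-2) = real n - 2" using n by simp
  have upr: "2 * real (Max Ss) + (real n - 2) \<le> (real n - 2) * real p"
    using up n2 by (metis of_nat_add of_nat_le_iff of_nat_mult of_nat_numeral)
  have U: "real (Max Ss) \<le> (real n - 2) * (real p - 1) / 2"
    using upr by (simp add: algebra_simps)
  define k where "k = n - 1"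
  define q where "q = p div k"
  define r where "r = p mod k"
  have k0: "0 < k" unfolding k_def using n by simp
  have bc: "2 * card (blk k p) = k * q * (k - 1) + r * (r - 1)"
    unfolding q_def r_def using blk_card[OF k0] .
  have pqr: "real p = real k * real q + real r"
  proof -
    have "p = k * q + r" unfolding q_def r_def by simp
    then show ?thesis by (metis of_nat_add of_nat_mult)
  qed
  have rr: "real (r * (r - 1)) = real r * (real r - 1)" by (cases r) (auto simp: algebra_simps)
  have kk: "real (k - 1) = real k - 1" using k0 by simp
  have bcr: "2 * real (card (blk k p)) = real k * real q * (real k - 1) + real r * (real r - 1)"
  proof -
    have "real (2 * card (blk k p)) = real (k * q * (k - 1)) + real (r * (r - 1))" using bc by simp
    then show ?thesis using rr kk by simp
  qed
  have K: "real k = real n - 1" unfolding k_def using n by simp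
  have L: "(real n - 2) * real p / 2 - (real n - 1)^2 / 8 \<le> real (card (blk k p))"
  proof -
    have e1: "(real n - 2) * real p / 2 - (real n - 1)^2 / 8
        = (real k - 1)*(real k * real q + real r)/2 - (real k)^2/8"
    proof -
      have n_eq: "real n = real k + 1" using K by simp
      show ?thesis unfolding n_eq pqr by (simp add: field_simps power2_eq_square)
    qed
    have e2: "real (card (blk k p)) = (real k * real q * (real k - 1) + real r * (real r - 1))/2"
      using bcr by simp
    show ?thesis unfolding e1 e2 by (rule real_lb)
  qed
  have "real (card (blk k p)) \<le> real (Max Ss)" using low unfolding k_def by simp
  then show ?thesis using L U ex by simp
qed


end
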